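(* Let $L\in\mathcal{N}$ and assume that $L$ is isomorphic to a sublattice of a free lattice. Assume that $K$ is a sublattice of $L$ and $a\in L$ is an element such that $a\parallel b$ for all $b\in K$. Then $$\mathrm{Dec}(K)\le \bigl|\{a\vee b: b\in K\}\times\{a\wedge b: b\in K\}\bigr|.$$
   Context: $\mathcal{N}$ denotes the variety of lattices generated by the pentagon $N_5$. For elements $x,y$, $x\parallel y$ means neither $x\le y$ nor $y\le x$. A subset $S$ of a lattice $K$ is convex if $x,z\in S$, $y\in K$, $x\le y\le z$ imply $y\in S$; a convex distributive sublattice of $K$ is a sublattice of $K$ that is convex and is a distributive lattice. A set partition $\mathcal{F}$ of the set of elements of $K$ is called distributive if every $F\in\mathcal{F}$ is a convex distributive sublattice of $K$, and for all distinct $F_1,F_2\in\mathcal{F}$, either $F_1\cup F_2$ is not a sublattice of $K$, or $F_1\cup F_2$ is not a convex subset of $K$, or $F_1\cup F_2$ is a convex distributive sublattice of $K$. $\mathrm{Dec}(K)$ is the minimum cardinality of a distributive partition of $K$. *)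

theory Defs
  imports Main
begin

datatype 'v lterm = Var 'v | Join "'v lterm" "'v lterm" | Meet "'v lterm" "'v lterm"

fun eval_with :: "('b \<Rightarrow> 'b \<Rightarrow> 'b) \<Rightarrow> ('b \<Rightarrow> 'b \<Rightarrow> 'b) \<Rightarrow> ('v \<Rightarrow> 'b) \<Rightarrow> 'v lterm \<Rightarrow> 'b" where
  "eval_with j m \<rho> (Var v) = \<rho> v"
| "eval_with j m \<rho> (Join s t) = j (eval_with j m \<rho> s) (eval_with j m \<rho> t)"
| "eval_with j m \<rho> (Meet s t) = m (eval_with j m \<rho> s) (eval_with j m \<rho> t)"

datatype n5 = N0 | Na | Nb | Nc | N1

fun n5_le :: "n5 \<Rightarrow> n5 \<Rightarrow> bool" where
  "n5_le N0 _ = True"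
| "n5_le _ N1 = True"
| "n5_le Na Na = True"
| "n5_le Na Nc = True"
| "n5_le Nb Nb = True"
| "n5_le Nc Nc = True"
| "n5_le _ _ = False"

definition n5_join :: "n5 \<Rightarrow> n5 \<Rightarrow> n5" where
  "n5_join x y = (if n5_le x y then y else if n5_le y x then x else N1)"

definition n5_meet :: "n5 \<Rightarrow> n5 \<Rightarrow> n5" where
  "n5_meet x y = (if n5_le x y then x else if n5_le y x then y else N0)"

text \<open>The variety \<open>\<N>\<close> generated by N5 = the class of lattices satisfying every
  lattice identity that holds in N5 (Birkhoff's HSP theorem).\<close>

definition in_var_N5 :: "'a::lattice itself \<Rightarrow> bool" where
  "in_var_N5 _ \<longleftrightarrow>
     (\<forall>s t :: nat lterm.
        (\<forall>\<rho> :: nat \<Rightarrow> n5. eval_with n5_join n5_meet \<rho> s = eval_with n5_join n5_meet \<rho> t)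
        \<longrightarrow> (\<forall>\<rho> :: nat \<Rightarrow> 'a. eval_with sup inf \<rho> s = eval_with sup inf \<rho> t))"

inductive lat_eq :: "'x lterm \<Rightarrow> 'x lterm \<Rightarrow> bool" where
  refl: "lat_eq s s"
| sym: "lat_eq s t \<Longrightarrow> lat_eq t s"
| trans: "lat_eq s t \<Longrightarrow> lat_eq t u \<Longrightarrow> lat_eq s u"
| cong_join: "lat_eq s s' \<Longrightarrow> lat_eq t t' \<Longrightarrow> lat_eq (Join s t) (Join s' t')"
| cong_meet: "lat_eq s s' \<Longrightarrow> lat_eq t t' \<Longrightarrow> lat_eq (Meet s t) (Meet s' t')"
| join_idem: "lat_eq (Join s s) s"
| meet_idem: "lat_eq (Meet s s) s"
| join_comm: "lat_eq (Join s t) (Join t s)"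
| meet_comm: "lat_eq (Meet s t) (Meet t s)"
| join_assoc: "lat_eq (Join (Join s t) u) (Join s (Join t u))"
| meet_assoc: "lat_eq (Meet (Meet s t) u) (Meet s (Meet t u))"
| absorb1: "lat_eq (Join s (Meet s t)) s"
| absorb2: "lat_eq (Meet s (Join s t)) s"

text \<open>The free lattice FL(X) on the generator set X = UNIV :: 'x set is the quotient
  of \<open>'x lterm\<close> by \<open>lat_eq\<close>. A lattice embedding of 'a into FL('x) is given via
  representatives: injective modulo \<open>lat_eq\<close> and preserving joins and meets.\<close>

definition embeds_in_free_lattice :: "('a::lattice \<Rightarrow> 'x lterm) \<Rightarrow> bool" where
  "embeds_in_free_lattice h \<longleftrightarrow>
     (\<forall>x y. lat_eq (h x) (h y) \<longrightarrow> x = y) \<and>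
     (\<forall>x y. lat_eq (h (sup x y)) (Join (h x) (h y))) \<and>
     (\<forall>x y. lat_eq (h (inf x y)) (Meet (h x) (h y)))"

definition sublattice_of :: "'a::lattice set \<Rightarrow> 'a set \<Rightarrow> bool" where
  "sublattice_of S K \<longleftrightarrow> S \<subseteq> K \<and> (\<forall>x\<in>S. \<forall>y\<in>S. sup x y \<in> S \<and> inf x y \<in> S)"

definition convex_in :: "'a::lattice set \<Rightarrow> 'a set \<Rightarrow> bool" where
  "convex_in S K \<longleftrightarrow> S \<subseteq> K \<and> (\<forall>x\<in>S. \<forall>z\<in>S. \<forall>y\<in>K. x \<le> y \<and> y \<le> z \<longrightarrow> y \<in> S)"

definition distrib_set :: "'a::lattice set \<Rightarrow> bool" where
  "distrib_set S \<longleftrightarrow> (\<forall>x\<in>S. \<forall>y\<in>S. \<forall>z\<in>S. inf x (sup y z) = sup (inf x y) (inf x z))"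

definition convex_distrib_sublattice :: "'a::lattice set \<Rightarrow> 'a set \<Rightarrow> bool" where
  "convex_distrib_sublattice S K \<longleftrightarrow> sublattice_of S K \<and> convex_in S K \<and> distrib_set S"

definition is_partition :: "'a set set \<Rightarrow> 'a set \<Rightarrow> bool" where
  "is_partition \<F> K \<longleftrightarrow> \<Union>\<F> = K \<and> {} \<notin> \<F> \<and>
     (\<forall>F1\<in>\<F>. \<forall>F2\<in>\<F>. F1 \<noteq> F2 \<longrightarrow> F1 \<inter> F2 = {})"

definition distributive_partition :: "'a::lattice set set \<Rightarrow> 'a set \<Rightarrow> bool" where
  "distributive_partition \<F> K \<longleftrightarrow> is_partition \<F> K \<and>
     (\<forall>F\<in>\<F>. convex_distrib_sublattice F K) \<and>
     (\<forall>F1\<in>\<F>. \<forall>F2\<in>\<F>. F1 \<noteq> F2 \<longrightarrow>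
        \<not> sublattice_of (F1 \<union> F2) K \<or> \<not> convex_in (F1 \<union> F2) K \<or>
        convex_distrib_sublattice (F1 \<union> F2) K)"

text \<open>\<open>Dec(K) \<le> |S|\<close>: since Dec(K) is the least cardinality of a distributive
  partition, this means some distributive partition of K injects into S.\<close>

definition Dec_le :: "'a::lattice set \<Rightarrow> 'b set \<Rightarrow> bool" where
  "Dec_le K S \<longleftrightarrow> (\<exists>\<F>. distributive_partition \<F> K \<and> (\<exists>f. inj_on f \<F> \<and> f ` \<F> \<subseteq> S))"

definition incomparable :: "'a::order \<Rightarrow> 'a \<Rightarrow> bool" where
  "incomparable x y \<longleftrightarrow> \<not> x \<le> y \<and> \<not> y \<le> x"

end

theory Submission
  imports Defs
begin

lemma n5_SDm: "\<forall>x y z::n5. n5_meet x (n5_join y z) = n5_meet x (n5_join y (n5_meet x (n5_join z (n5_meet x y))))"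
  apply (intro allI) subgoal for x y z by (cases x; cases y; cases z) (simp_all add: n5_join_def n5_meet_def)
  done

lemma n5_SDj: "\<forall>x y z::n5. n5_join x (n5_meet y z) = n5_join x (n5_meet y (n5_join x (n5_meet z (n5_join x y))))"
  apply (intro allI) subgoal for x y z by (cases x; cases y; cases z) (simp_all add: n5_join_def n5_meet_def)
  done

definition "tY1 = Join (Var 2) (Meet (Var 0) (Var (1::nat)))"
definition "tZ1 = Join (Var 3) (Meet (Var 0) tY1)"
definition "tY2 = Meet tY1 (Join (Var 0) tZ1)"
definition "tX2 = Meet (Var 1) (Join (Var 0) tY2)"

lemma n5_chain: "\<forall>a x y z::n5.
  (let y1 = n5_join y (n5_meet a x); z1 = n5_join z (n5_meet a y1);
       y2 = n5_meet y1 (n5_join a z1); x2 = n5_meet x (n5_join a y2) in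
   n5_meet x2 (n5_join y2 z1) = n5_join (n5_meet x2 y2) (n5_meet x2 z1) \<and>
   n5_meet y2 (n5_join x2 z1) = n5_join (n5_meet y2 x2) (n5_meet y2 z1) \<and>
   n5_meet z1 (n5_join x2 y2) = n5_join (n5_meet z1 x2) (n5_meet z1 y2))"
  apply (intro allI) subgoal for a x y z
    by (cases a; cases x; cases y; cases z) (simp_all add: n5_join_def n5_meet_def Let_def)
  done


lemma transfer_N5:
  assumes "in_var_N5 TYPE('a::lattice)"
    and "\<forall>\<rho>::nat\<Rightarrow>n5. eval_with n5_join n5_meet \<rho> s = eval_with n5_join n5_meet \<rho> t"
  shows "eval_with sup inf (\<rho>::nat\<Rightarrow>'a) s = eval_with sup inf \<rho> t"
  using assms unfolding in_var_N5_def by blast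

lemma SDm:
  assumes "in_var_N5 TYPE('a::lattice)"
  shows "inf x (sup y z) = inf (x::'a) (sup y (inf x (sup z (inf x y))))"
proof -
  let ?s = "Meet (Var 0) (Join (Var 1) (Var (2::nat)))"
  let ?t = "Meet (Var 0) (Join (Var 1) (Meet (Var 0) (Join (Var 2) (Meet (Var 0) (Var (1::nat))))))"
  have "\<forall>\<rho>::nat\<Rightarrow>n5. eval_with n5_join n5_meet \<rho> ?s = eval_with n5_join n5_meet \<rho> ?t"
    using n5_SDm by simp
  from transfer_N5[OF assms this, of "\<lambda>i. if i = 0 then x else if i = 1 then y else z"]
  show ?thesis by simp
qed

lemma SDj:
  assumes "in_var_N5 TYPE('a::lattice)"
  shows "sup x (inf y z) = sup (x::'a) (inf y (sup x (inf z (sup x y))))"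
proof -
  let ?s = "Join (Var 0) (Meet (Var 1) (Var (2::nat)))"
  let ?t = "Join (Var 0) (Meet (Var 1) (Join (Var 0) (Meet (Var 2) (Join (Var 0) (Var (1::nat))))))"
  have "\<forall>\<rho>::nat\<Rightarrow>n5. eval_with n5_join n5_meet \<rho> ?s = eval_with n5_join n5_meet \<rho> ?t"
    using n5_SDj by simp
  from transfer_N5[OF assms this, of "\<lambda>i. if i = 0 then x else if i = 1 then y else z"]
  show ?thesis by simp
qed

lemma sd_meet:
  assumes "in_var_N5 TYPE('a::lattice)" and "inf a d = inf a (e::'a)"
  shows "inf a (sup d e) = inf a d"
proof -
  have 1: "sup e (inf a d) = e" using assms(2) by (metis inf_le2 sup.absorb1)
  have 2: "sup d (inf a e) = d" using assms(2) by (metis inf_le2 sup.absorb1)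
  show ?thesis using SDm[OF assms(1), of a d e] 1 2 by simp
qed

lemma sd_join:
  assumes "in_var_N5 TYPE('a::lattice)" and "sup a d = sup a (e::'a)"
  shows "sup a (inf d e) = sup a d"
proof -
  have 1: "inf e (sup a d) = e" using assms(2) by (metis sup_ge2 inf.absorb1)
  have 2: "inf d (sup a e) = d" using assms(2) by (metis sup_ge2 inf.absorb1)
  show ?thesis using SDj[OF assms(1), of a d e] 1 2 by simp
qed

lemma chain_dist:
  assumes "in_var_N5 TYPE('a::lattice)"
    and h: "sup a x \<le> sup a y" "sup a y \<le> sup a z" "inf a x \<le> inf a y" "inf a y \<le> inf a (z::'a)"
  shows "inf x (sup y z) = sup (inf x y) (inf x z) \<and>
         inf y (sup x z) = sup (inf y x) (inf y z) \<and>
         inf z (sup x y) = sup (inf z x) (inf z y)"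
proof -
  let ?Y1 = "Join (Var 2) (Meet (Var 0) (Var (1::nat)))"
  let ?Z1 = "Join (Var 3) (Meet (Var 0) ?Y1)"
  let ?Y2 = "Meet ?Y1 (Join (Var 0) ?Z1)"
  let ?X2 = "Meet (Var 1) (Join (Var 0) ?Y2)"
  let ?\<rho> = "\<lambda>i::nat. if i = 0 then a else if i = 1 then x else if i = 2 then y else z"
  have y1: "sup y (inf a x) = y" using h(3) by (meson inf_le2 order_trans sup.absorb1)
  have z1: "sup z (inf a y) = z" using h(4) by (meson inf_le2 order_trans sup.absorb1)
  have y2: "inf y (sup a z) = y" using h(2) by (meson sup_ge2 order_trans inf.absorb1)
  have x2: "inf x (sup a y) = x" using h(1) by (meson sup_ge2 order_trans inf.absorb1)
  have e1: "eval_with sup inf ?\<rho> (Meet ?X2 (Join ?Y2 ?Z1)) = eval_with sup inf ?\<rho> (Join (Meet ?X2 ?Y2) (Meet ?X2 ?Z1))"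
    apply (rule transfer_N5[OF assms(1)]) using n5_chain by (simp add: Let_def)
  have e2: "eval_with sup inf ?\<rho> (Meet ?Y2 (Join ?X2 ?Z1)) = eval_with sup inf ?\<rho> (Join (Meet ?Y2 ?X2) (Meet ?Y2 ?Z1))"
    apply (rule transfer_N5[OF assms(1)]) using n5_chain by (simp add: Let_def)
  have e3: "eval_with sup inf ?\<rho> (Meet ?Z1 (Join ?X2 ?Y2)) = eval_with sup inf ?\<rho> (Join (Meet ?Z1 ?X2) (Meet ?Z1 ?Y2))"
    apply (rule transfer_N5[OF assms(1)]) using n5_chain by (simp add: Let_def)
  show ?thesis using e1 e2 e3 by (simp add: y1 z1 y2 x2)
qed


definition cmp_phi :: "'a::lattice \<Rightarrow> 'a \<Rightarrow> 'a \<Rightarrow> bool" where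
  "cmp_phi a p q \<longleftrightarrow> sup a p \<le> sup a q \<and> inf a p \<le> inf a q"

lemma dist_triple:
  assumes N: "in_var_N5 TYPE('a::lattice)"
    and c: "\<And>p q. p \<in> {x,y,z} \<Longrightarrow> q \<in> {x,y,z} \<Longrightarrow> cmp_phi a p q \<or> cmp_phi a q p"
  shows "inf x (sup y z) = sup (inf x y) (inf (x::'a) z)"
proof -
  have D: "\<And>p q r. cmp_phi a p q \<Longrightarrow> cmp_phi a q r \<Longrightarrow>
     inf p (sup q r) = sup (inf p q) (inf p r) \<and>
     inf q (sup p r) = sup (inf q p) (inf q r) \<and>
     inf r (sup p q) = sup (inf r p) (inf r q)"
    using chain_dist[OF N] unfolding cmp_phi_def by blast
  have xy: "cmp_phi a x y \<or> cmp_phi a y x" and yz: "cmp_phi a y z \<or> cmp_phi a z y"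
    and xz: "cmp_phi a x z \<or> cmp_phi a z x" using c by auto
  show ?thesis
    using xy yz xz D[of x y z] D[of x z y] D[of y x z] D[of y z x] D[of z x y] D[of z y x]
    by (auto simp: sup_commute)
qed

theorem theorem5p2:
  fixes a :: "'a::lattice" and K :: "'a set"
  assumes "in_var_N5 TYPE('a)"
    and "\<exists>h :: 'a \<Rightarrow> 'x lterm. embeds_in_free_lattice h"
    and "sublattice_of K UNIV"
    and "\<forall>b\<in>K. incomparable a b"
  shows "Dec_le K ({sup a b | b. b \<in> K} \<times> {inf a b | b. b \<in> K})"
proof -
  note N = assms(1)
  have K: "\<And>x y. x \<in> K \<Longrightarrow> y \<in> K \<Longrightarrow> sup x y \<in> K \<and> inf x y \<in> K"
    using assms(3) unfolding sublattice_of_def by blast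
  define phi where "phi c = (sup a c, inf a c)" for c
  define C where "C b = {c \<in> K. phi c = phi b}" for b
  define F where "F = C ` K"
  have inC: "c \<in> C b \<longleftrightarrow> c \<in> K \<and> phi c = phi b" for b c unfolding C_def by simp
  have Ceq: "b1 \<in> K \<Longrightarrow> b2 \<in> K \<Longrightarrow> C b1 = C b2 \<longleftrightarrow> phi b1 = phi b2" for b1 b2
    unfolding C_def by auto
  have cmp_eq: "phi p = phi q \<Longrightarrow> cmp_phi a p q" for p q
    unfolding phi_def cmp_phi_def by simp
  have cmp_cong: "phi p = phi p' \<Longrightarrow> phi q = phi q' \<Longrightarrow> cmp_phi a p q = cmp_phi a p' q'" for p q p' q'
    unfolding phi_def cmp_phi_def by simp
  have dist2: "distrib_set S" if "\<And>p q. p \<in> S \<Longrightarrow> q \<in> S \<Longrightarrow> cmp_phi a p q \<or> cmp_phi a q p" for S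
    unfolding distrib_set_def
  proof (intro ballI)
    fix x y z assume xyz: "x \<in> S" "y \<in> S" "z \<in> S"
    show "inf x (sup y z) = sup (inf x y) (inf x z)"
      apply (rule dist_triple[OF N, where a=a])
      using that xyz by blast
  qed
  have cdsl: "convex_distrib_sublattice (C b) K" if "b \<in> K" for b
    unfolding convex_distrib_sublattice_def
  proof (intro conjI)
    show "sublattice_of (C b) K" unfolding sublattice_of_def
    proof (intro conjI ballI)
      show "C b \<subseteq> K" unfolding C_def by blast
      fix x y assume x: "x \<in> C b" and y: "y \<in> C b"
      then have xy: "phi x = phi y" by (simp add: inC)
      then have m: "inf a x = inf a y" and j: "sup a x = sup a y" by (auto simp: phi_def)
      have "inf a (sup x y) = inf a x" by (rule sd_meet[OF N m])
      moreover have "sup a (sup x y) = sup a x" using j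
        by (metis sup.assoc sup.commute sup.idem sup.left_commute)
      ultimately show "sup x y \<in> C b" using x y K by (auto simp: inC phi_def)
      have "sup a (inf x y) = sup a x" by (rule sd_join[OF N j])
      moreover have "inf a (inf x y) = inf a x" using m
        by (metis inf.assoc inf.commute inf.idem inf.left_commute)
      ultimately show "inf x y \<in> C b" using x y K by (auto simp: inC phi_def)
    qed
    show "convex_in (C b) K" unfolding convex_in_def
    proof (intro conjI ballI impI)
      show "C b \<subseteq> K" unfolding C_def by blast
      fix x z y assume x: "x \<in> C b" and z: "z \<in> C b" and y: "y \<in> K" and le: "x \<le> y \<and> y \<le> z"
      have 1: "sup a x \<le> sup a y" "sup a y \<le> sup a z" using le by (simp_all add: le_supI2 sup.coboundedI2)
      have 2: "inf a x \<le> inf a y" "inf a y \<le> inf a z" using le by (simp_all add: le_infI2 inf.coboundedI2)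
      have "phi x = phi b" "phi z = phi b" using x z by (auto simp: inC)
      then have "sup a x = sup a z" "inf a x = inf a z" by (auto simp: phi_def)
      then have "phi y = phi x" using 1 2 unfolding phi_def by (metis antisym)
      then show "y \<in> C b" using x y by (auto simp: inC)
    qed
    show "distrib_set (C b)"
      by (rule dist2) (auto simp: inC intro: cmp_eq)
  qed
  have part: "distributive_partition F K"
    unfolding distributive_partition_def
  proof (intro conjI ballI impI)
    show "is_partition F K" unfolding is_partition_def F_def
    proof (intro conjI ballI impI)
      show "\<Union> (C ` K) = K" by (auto simp: inC)
      show "{} \<notin> C ` K" by (auto simp: inC)
      fix F1 F2 assume "F1 \<in> C ` K" "F2 \<in> C ` K" "F1 \<noteq> F2"
      then show "F1 \<inter> F2 = {}" by (auto simp: inC)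
    qed
    show "convex_distrib_sublattice F' K" if "F' \<in> F" for F' using that cdsl by (auto simp: F_def)
    fix F1 F2 assume F1: "F1 \<in> F" and F2: "F2 \<in> F" and ne: "F1 \<noteq> F2"
    obtain b1 b2 where b1: "b1 \<in> K" "F1 = C b1" and b2: "b2 \<in> K" "F2 = C b2"
      using F1 F2 by (auto simp: F_def)
    show "\<not> sublattice_of (F1 \<union> F2) K \<or> \<not> convex_in (F1 \<union> F2) K \<or>
        convex_distrib_sublattice (F1 \<union> F2) K"
    proof (cases "sublattice_of (F1 \<union> F2) K")
      case False then show ?thesis by blast
    next
      case True
      have b1in: "b1 \<in> F1 \<union> F2" "b2 \<in> F1 \<union> F2" using b1 b2 by (auto simp: inC)
      then have "sup b1 b2 \<in> F1 \<union> F2" using True unfolding sublattice_of_def by blast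
      then have "phi (sup b1 b2) = phi b1 \<or> phi (sup b1 b2) = phi b2" using b1 b2 by (auto simp: inC)
      moreover have "cmp_phi a b1 (sup b1 b2)" "cmp_phi a b2 (sup b1 b2)"
        unfolding cmp_phi_def
        by (simp_all add: le_supI2 le_infI2 sup.coboundedI1 sup.coboundedI2 inf.coboundedI2)
      ultimately have cb: "cmp_phi a b1 b2 \<or> cmp_phi a b2 b1" using cmp_cong by metis
      have "distrib_set (F1 \<union> F2)"
      proof (rule dist2)
        fix p q assume "p \<in> F1 \<union> F2" "q \<in> F1 \<union> F2"
        then have "phi p \<in> {phi b1, phi b2}" "phi q \<in> {phi b1, phi b2}" using b1 b2 by (auto simp: inC)
        then obtain p' q' where pq: "p' \<in> {b1, b2}" "q' \<in> {b1, b2}" "phi p = phi p'" "phi q = phi q'"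
          by blast
        have "cmp_phi a p' q' \<or> cmp_phi a q' p'"
          using pq(1,2) cb by (auto simp: cmp_phi_def)
        then show "cmp_phi a p q \<or> cmp_phi a q p"
          using cmp_cong[OF pq(3) pq(4)] cmp_cong[OF pq(4) pq(3)] by simp
      qed
      then show ?thesis unfolding convex_distrib_sublattice_def using True by blast
    qed
  qed
  define f where "f G = phi (SOME c. c \<in> G)" for G
  have fC: "f (C b) = phi b" if "b \<in> K" for b
  proof -
    have "b \<in> C b" using that by (simp add: inC)
    then have "(SOME c. c \<in> C b) \<in> C b" by (rule someI)
    then show ?thesis by (simp add: f_def inC)
  qed
  have "inj_on f F"
    unfolding inj_on_def F_def using fC Ceq by auto
  moreover have "f ` F \<subseteq> {sup a b | b. b \<in> K} \<times> {inf a b | b. b \<in> K}"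
    unfolding F_def using fC by (auto simp: phi_def)
  ultimately show ?thesis unfolding Dec_le_def using part by blast
qed

end
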